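(* There is an absolute constant $C$ such that the following holds. Let $p$ be a real polynomial in $n$ variables of degree $d$ whose Hessian determinant $h_p(x)=\det(\nabla^2 p(x))$ is not identically zero. Then there is $a\in\mathbb{Z}^n$ with $\mathrm{bl}(a)\le C\, n\log(dn)$ such that $h_p(a)\neq0$.
   Context: For an integer $k$, $\mathrm{bl}(k)=\max\{1,\lceil\log_2|k|\rceil\}$; the bit length of an integer vector is the sum of the bit lengths of its entries. *)

theory Defs
  imports Complex_Main "HOL-Combinatorics.Permutations"
begin

text \<open>A real polynomial in the variables x_0, ..., x_(n-1) is represented by its
coefficient function on exponent vectors (monomials) alpha :: nat => nat.\<close>

definition is_mpoly :: "nat \<Rightarrow> ((nat \<Rightarrow> nat) \<Rightarrow> real) \<Rightarrow> bool" where
  "is_mpoly n c \<longleftrightarrow> finite {\<alpha>. c \<alpha> \<noteq> 0} \<and> (\<forall>\<alpha>. c \<alpha> \<noteq> 0 \<longrightarrow> (\<forall>i\<ge>n. \<alpha> i = 0))"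

definition mpoly_deg :: "nat \<Rightarrow> ((nat \<Rightarrow> nat) \<Rightarrow> real) \<Rightarrow> nat" where
  "mpoly_deg n c = Max (insert 0 {(\<Sum>i<n. \<alpha> i) | \<alpha>. c \<alpha> \<noteq> 0})"

definition mpoly_eval :: "nat \<Rightarrow> ((nat \<Rightarrow> nat) \<Rightarrow> real) \<Rightarrow> (nat \<Rightarrow> real) \<Rightarrow> real" where
  "mpoly_eval n c x = (\<Sum>\<alpha>\<in>{\<alpha>. c \<alpha> \<noteq> 0}. c \<alpha> * (\<Prod>i<n. x i ^ \<alpha> i))"

definition mpoly_pderiv :: "nat \<Rightarrow> ((nat \<Rightarrow> nat) \<Rightarrow> real) \<Rightarrow> ((nat \<Rightarrow> nat) \<Rightarrow> real)" where
  "mpoly_pderiv j c = (\<lambda>\<alpha>. real (Suc (\<alpha> j)) * c (\<alpha>(j := Suc (\<alpha> j))))"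

definition hessian_det :: "nat \<Rightarrow> ((nat \<Rightarrow> nat) \<Rightarrow> real) \<Rightarrow> (nat \<Rightarrow> real) \<Rightarrow> real" where
  "hessian_det n c x =
     (\<Sum>\<sigma>\<in>{\<sigma>. \<sigma> permutes {..<n}}. of_int (sign \<sigma>) *
        (\<Prod>i<n. mpoly_eval n (mpoly_pderiv i (mpoly_pderiv (\<sigma> i) c)) x))"

definition bl :: "int \<Rightarrow> int" where
  "bl k = max 1 \<lceil>log 2 \<bar>real_of_int k\<bar>\<rceil>"

definition bl_vec :: "nat \<Rightarrow> (nat \<Rightarrow> int) \<Rightarrow> int" where
  "bl_vec n a = (\<Sum>i<n. bl (a i))"

end

theory Submission
  imports Defs "HOL-Computational_Algebra.Polynomial"
begin

definition lp :: "nat \<Rightarrow> ((nat \<Rightarrow> real) \<Rightarrow> real) \<Rightarrow> bool" where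
  "lp D f \<longleftrightarrow> (\<forall>x i. \<exists>p. degree p \<le> D \<and> (\<forall>t. f (x(i:=t)) = poly p t))"

lemma lp_const: "lp D (\<lambda>x. k)"
  unfolding lp_def by (intro allI exI[of _ "[:k:]"]) auto

lemma lp_mono: "lp D f \<Longrightarrow> D \<le> D' \<Longrightarrow> lp D' f"
  unfolding lp_def by (meson order_trans)

lemma lp_add: "lp D f \<Longrightarrow> lp D g \<Longrightarrow> lp D (\<lambda>x. f x + g x)"
  unfolding lp_def
proof (intro allI)
  fix x i assume f: "\<forall>x i. \<exists>p. degree p \<le> D \<and> (\<forall>t. f (x(i := t)) = poly p t)"
    and g: "\<forall>x i. \<exists>p. degree p \<le> D \<and> (\<forall>t. g (x(i := t)) = poly p t)"
  obtain p where p: "degree p \<le> D" "\<forall>t. f (x(i := t)) = poly p t" using f by blast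
  obtain q where q: "degree q \<le> D" "\<forall>t. g (x(i := t)) = poly q t" using g by blast
  show "\<exists>r. degree r \<le> D \<and> (\<forall>t. f (x(i := t)) + g (x(i := t)) = poly r t)"
    by (rule exI[of _ "p + q"]) (use p q degree_add_le in auto)
qed

lemma lp_mult: "lp D1 f \<Longrightarrow> lp D2 g \<Longrightarrow> lp (D1 + D2) (\<lambda>x. f x * g x)"
  unfolding lp_def
proof (intro allI)
  fix x i assume f: "\<forall>x i. \<exists>p. degree p \<le> D1 \<and> (\<forall>t. f (x(i := t)) = poly p t)"
    and g: "\<forall>x i. \<exists>p. degree p \<le> D2 \<and> (\<forall>t. g (x(i := t)) = poly p t)"
  obtain p where p: "degree p \<le> D1" "\<forall>t. f (x(i := t)) = poly p t" using f by blast
  obtain q where q: "degree q \<le> D2" "\<forall>t. g (x(i := t)) = poly q t" using g by blast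
  have "degree (p * q) \<le> D1 + D2"
    using p q degree_mult_le[of p q] by linarith
  then show "\<exists>r. degree r \<le> D1 + D2 \<and> (\<forall>t. f (x(i := t)) * g (x(i := t)) = poly r t)"
    by (intro exI[of _ "p * q"]) (use p q in auto)
qed

lemma lp_sum_fin: "finite A \<Longrightarrow> (\<And>a. a \<in> A \<Longrightarrow> lp D (g a)) \<Longrightarrow> lp D (\<lambda>x. \<Sum>a\<in>A. g a x)"
proof (induction A rule: finite_induct)
  case empty then show ?case using lp_const[of D 0] by simp
next
  case (insert a F)
  then show ?case using lp_add[of D "g a" "\<lambda>x. \<Sum>a\<in>F. g a x"] by simp
qed

lemma lp_sum: "(\<And>a. a \<in> A \<Longrightarrow> lp D (g a)) \<Longrightarrow> lp D (\<lambda>x. \<Sum>a\<in>A. g a x)"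
  using lp_sum_fin[of A D g] lp_const[of D 0] by (cases "finite A") auto

lemma lp_prod: "finite A \<Longrightarrow> (\<And>a. a \<in> A \<Longrightarrow> lp (E a) (g a)) \<Longrightarrow> lp (\<Sum>a\<in>A. E a) (\<lambda>x. \<Prod>a\<in>A. g a x)"
proof (induction A rule: finite_induct)
  case empty then show ?case using lp_const[of 0 1] by simp
next
  case (insert a F)
  then show ?case using lp_mult[of "E a" "g a" "\<Sum>a\<in>F. E a" "\<lambda>x. \<Prod>a\<in>F. g a x"] by simp
qed

lemma lp_varpow: "lp m (\<lambda>x. x k ^ m)"
  unfolding lp_def
proof (intro allI)
  fix x :: "nat \<Rightarrow> real" and i :: nat
  show "\<exists>p. degree p \<le> m \<and> (\<forall>t. (x(i := t)) k ^ m = poly p t)"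
  proof (cases "k = i")
    case True
    show ?thesis
    proof (rule exI[of _ "monom 1 m"], intro conjI allI)
      show "degree (monom (1::real) m) \<le> m" by (rule degree_monom_le)
      fix t show "(x(i := t)) k ^ m = poly (monom 1 m) t"
        using True by (simp only: poly_monom fun_upd_same mult_1)
    qed
  next
    case False
    then show ?thesis by (intro exI[of _ "[:x k ^ m:]"]) auto
  qed
qed

lemma lp_eval:
  assumes "\<And>\<alpha>. c \<alpha> \<noteq> 0 \<Longrightarrow> (\<Sum>k<n. \<alpha> k) \<le> D"
  shows "lp D (mpoly_eval n c)"
proof -
  have "lp D (\<lambda>x. \<Sum>\<alpha>\<in>{\<alpha>. c \<alpha> \<noteq> 0}. c \<alpha> * (\<Prod>k<n. x k ^ \<alpha> k))"
  proof (rule lp_sum)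
    fix \<alpha> assume "\<alpha> \<in> {\<alpha>. c \<alpha> \<noteq> 0}"
    then have le: "(\<Sum>k<n. \<alpha> k) \<le> D" using assms by auto
    have "lp (\<Sum>k<n. \<alpha> k) (\<lambda>x. \<Prod>k<n. x k ^ \<alpha> k)"
      by (rule lp_prod) (auto intro: lp_varpow)
    then have "lp (0 + (\<Sum>k<n. \<alpha> k)) (\<lambda>x. c \<alpha> * (\<Prod>k<n. x k ^ \<alpha> k))"
      by (rule lp_mult[OF lp_const])
    then show "lp D (\<lambda>x. c \<alpha> * (\<Prod>k<n. x k ^ \<alpha> k))"
      using le lp_mono by simp
  qed
  then show ?thesis unfolding mpoly_eval_def[abs_def] .
qed

lemma pd2_deg:
  assumes mp: "is_mpoly n c" and ij: "i < n" "j < n"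
    and nz: "mpoly_pderiv i (mpoly_pderiv j c) \<alpha> \<noteq> 0"
  shows "(\<Sum>k<n. \<alpha> k) + 2 \<le> mpoly_deg n c"
proof -
  define \<alpha>' where "\<alpha>' = \<alpha>(i := Suc (\<alpha> i))"
  define \<beta> where "\<beta> = \<alpha>'(j := Suc (\<alpha>' j))"
  have cb: "c \<beta> \<noteq> 0" using nz unfolding mpoly_pderiv_def \<alpha>'_def \<beta>_def by auto
  have b: "\<beta> k = \<alpha> k + (if k = i then 1 else 0) + (if k = j then 1 else 0)" for k
    unfolding \<beta>_def \<alpha>'_def by auto
  have "(\<Sum>k<n. \<beta> k) = (\<Sum>k<n. \<alpha> k) + (\<Sum>k<n. (if k = i then 1 else 0)) + (\<Sum>k<n. (if k = j then 1 else 0))"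
    unfolding b by (simp add: sum.distrib)
  also have "\<dots> = (\<Sum>k<n. \<alpha> k) + 2" using ij by simp
  finally have sb: "(\<Sum>k<n. \<beta> k) = (\<Sum>k<n. \<alpha> k) + 2" .
  have fin: "finite {(\<Sum>i<n. \<gamma> i) | \<gamma>. c \<gamma> \<noteq> 0}"
    using mp unfolding is_mpoly_def by (simp add: setcompr_eq_image)
  have "(\<Sum>k<n. \<beta> k) \<le> mpoly_deg n c"
    unfolding mpoly_deg_def using fin cb by (intro Max_ge) auto
  then show ?thesis using sb by simp
qed

lemma hess_cong:
  assumes "\<And>i. i < n \<Longrightarrow> x i = y i"
  shows "hessian_det n c x = hessian_det n c y"
  unfolding hessian_det_def mpoly_eval_def using assms
  by (intro sum.cong refl arg_cong2[where f=times] prod.cong) auto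

lemma root_avoid:
  fixes p :: "real poly"
  assumes "p \<noteq> 0" "degree p \<le> D"
  shows "\<exists>m::nat. 1 \<le> m \<and> m \<le> D + 1 \<and> poly p (real m) \<noteq> 0"
proof (rule ccontr)
  assume "\<not> ?thesis"
  then have sub: "real ` {1..D+1} \<subseteq> {x. poly p x = 0}" by auto
  have "D + 1 = card (real ` {1..D+1})" by (simp add: card_image)
  also have "\<dots> \<le> card {x. poly p x = 0}"
    by (rule card_mono[OF poly_roots_finite[OF assms(1)] sub])
  also have "\<dots> \<le> degree p" by (rule card_poly_roots_bound[OF assms(1)])
  finally show False using assms(2) by simp
qed

lemma greedy:
  assumes "lp D f" "f x \<noteq> 0"
  shows "k \<le> n \<Longrightarrow> \<exists>y. f y \<noteq> 0 \<and> (\<forall>i<k. \<exists>m::nat. 1 \<le> m \<and> m \<le> D + 1 \<and> y i = real m)"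
proof (induction k)
  case 0 then show ?case using assms by auto
next
  case (Suc k)
  then obtain y where y: "f y \<noteq> 0" "\<forall>i<k. \<exists>m::nat. 1 \<le> m \<and> m \<le> D + 1 \<and> y i = real m" by auto
  obtain p where p: "degree p \<le> D" "\<forall>t. f (y(k:=t)) = poly p t"
    using assms(1) unfolding lp_def by blast
  have "poly p (y k) = f y" using p(2)[rule_format, of "y k"] by simp
  then have "p \<noteq> 0" using y(1) by auto
  then obtain m :: nat where m: "1 \<le> m" "m \<le> D + 1" "poly p (real m) \<noteq> 0"
    using root_avoid p(1) by blast
  have "f (y(k := real m)) \<noteq> 0" using p(2) m(3) by simp
  show ?case
  proof (intro exI conjI)
    show "f (y(k := real m)) \<noteq> 0" by fact
    show "\<forall>i<Suc k. \<exists>ma::nat. 1 \<le> ma \<and> ma \<le> D + 1 \<and> (y(k := real m)) i = real ma"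
      using y m by (auto simp: less_Suc_eq)
  qed
qed

theorem corollary4p6:
  shows "\<exists>C::real. \<forall>(n::nat) (d::nat) (c::(nat \<Rightarrow> nat) \<Rightarrow> real).
           is_mpoly n c \<and> mpoly_deg n c = d \<and> (\<exists>x. hessian_det n c x \<noteq> 0) \<longrightarrow>
           (\<exists>a::nat \<Rightarrow> int. (\<forall>i\<ge>n. a i = 0) \<and>
              real_of_int (bl_vec n a) \<le> C * real n * log 2 (real d * real n) \<and>
              hessian_det n c (\<lambda>i. real_of_int (a i)) \<noteq> 0)"
proof (rule exI[of _ 3], intro allI impI)
  fix n d :: nat and c :: "(nat \<Rightarrow> nat) \<Rightarrow> real"
  assume A: "is_mpoly n c \<and> mpoly_deg n c = d \<and> (\<exists>x. hessian_det n c x \<noteq> 0)"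
  then have mp: "is_mpoly n c" and dd: "mpoly_deg n c = d" by auto
  from A obtain x where hx: "hessian_det n c x \<noteq> 0" by auto
  show "\<exists>a::nat \<Rightarrow> int. (\<forall>i\<ge>n. a i = 0) \<and>
              real_of_int (bl_vec n a) \<le> 3 * real n * log 2 (real d * real n) \<and>
              hessian_det n c (\<lambda>i. real_of_int (a i)) \<noteq> 0"
  proof (cases "n = 0")
    case True
    have "hessian_det n c (\<lambda>i. real_of_int 0) = hessian_det n c x"
      by (rule hess_cong) (use True in auto)
    then show ?thesis using hx True
      by (intro exI[of _ "\<lambda>_. 0"]) (auto simp: bl_vec_def)
  next
    case False
    then have n1: "n \<ge> 1" by simp
    have d2: "d \<ge> 2"
    proof (rule ccontr)
      assume nd: "\<not> 2 \<le> d"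
      have z: "mpoly_pderiv i (mpoly_pderiv j c) \<alpha> = 0" if "i < n" "j < n" for i j \<alpha>
        using pd2_deg[OF mp that, of \<alpha>] nd dd by fastforce
      have "hessian_det n c x = 0"
        unfolding hessian_det_def
      proof (intro sum.neutral ballI)
        fix \<sigma> assume "\<sigma> \<in> {\<sigma>. \<sigma> permutes {..<n}}"
        then have "\<sigma> 0 < n" using n1 permutes_in_image[of \<sigma> "{..<n}" 0] by auto
        then have "mpoly_eval n (mpoly_pderiv 0 (mpoly_pderiv (\<sigma> 0) c)) x = 0"
          unfolding mpoly_eval_def using z[of 0 "\<sigma> 0"] n1 by simp
        then have "(\<Prod>i<n. mpoly_eval n (mpoly_pderiv i (mpoly_pderiv (\<sigma> i) c)) x) = 0"
          using n1 by (intro prod_zero) auto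
        then show "of_int (sign \<sigma>) * (\<Prod>i<n. mpoly_eval n (mpoly_pderiv i (mpoly_pderiv (\<sigma> i) c)) x) = 0"
          by simp
      qed
      then show False using hx by simp
    qed
    have lph: "lp (n * d) (hessian_det n c)"
    proof -
      have "lp (n * d) (\<lambda>x. \<Sum>\<sigma>\<in>{\<sigma>. \<sigma> permutes {..<n}}. of_int (sign \<sigma>) *
        (\<Prod>i<n. mpoly_eval n (mpoly_pderiv i (mpoly_pderiv (\<sigma> i) c)) x))"
      proof (rule lp_sum)
        fix \<sigma> assume s: "\<sigma> \<in> {\<sigma>. \<sigma> permutes {..<n}}"
        have "lp (\<Sum>i<n. d) (\<lambda>x. \<Prod>i<n. mpoly_eval n (mpoly_pderiv i (mpoly_pderiv (\<sigma> i) c)) x)"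
        proof (rule lp_prod)
          fix i assume i: "i \<in> {..<n}"
          then have "\<sigma> i < n" using s permutes_in_image[of \<sigma> "{..<n}" i] by auto
          then show "lp d (mpoly_eval n (mpoly_pderiv i (mpoly_pderiv (\<sigma> i) c)))"
            using i pd2_deg[OF mp, of i "\<sigma> i"] dd by (intro lp_eval) fastforce
        qed simp
        then have "lp (0 + n * d) (\<lambda>x. of_int (sign \<sigma>) * (\<Prod>i<n. mpoly_eval n (mpoly_pderiv i (mpoly_pderiv (\<sigma> i) c)) x))"
          by (intro lp_mult[OF lp_const]) (simp add: mult.commute)
        then show "lp (n * d) (\<lambda>x. of_int (sign \<sigma>) * (\<Prod>i<n. mpoly_eval n (mpoly_pderiv i (mpoly_pderiv (\<sigma> i) c)) x))"
          by simp
      qed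
      then show ?thesis unfolding hessian_det_def[abs_def] .
    qed
    obtain y where y: "hessian_det n c y \<noteq> 0"
      "\<forall>i<n. \<exists>m::nat. 1 \<le> m \<and> m \<le> n * d + 1 \<and> y i = real m"
      using greedy[OF lph hx, of n n] by auto
    define a :: "nat \<Rightarrow> int" where "a i = (if i < n then \<lfloor>y i\<rfloor> else 0)" for i
    have ay: "real_of_int (a i) = y i" if ilt: "i < n" for i
    proof -
      obtain m :: nat where "y i = real m" using y(2) ilt by auto
      then show ?thesis using ilt unfolding a_def by simp
    qed
    have ha: "hessian_det n c (\<lambda>i. real_of_int (a i)) \<noteq> 0"
      using hess_cong[of n "\<lambda>i. real_of_int (a i)" y c] ay y(1) by simp
    define L where "L = log 2 (real d * real n)"
    have "real d \<ge> 2" "real n \<ge> 1" using d2 n1 by auto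
    then have dn2: "real d * real n \<ge> 2"
      using mult_mono[of 2 "real d" 1 "real n"] by simp
    have L1: "L \<ge> 1" unfolding L_def using dn2 by simp
    have bl: "real_of_int (bl (a i)) \<le> 3 * L" if ilt: "i < n" for i
    proof -
      obtain m :: nat where m: "1 \<le> m" "m \<le> n * d + 1" "y i = real m" using y(2) ilt by auto
      have ai: "\<bar>real_of_int (a i)\<bar> = real m" using ay[OF ilt] m by simp
      have "real m \<le> real (n * d + 1)" using m(2) by (simp only: of_nat_le_iff)
      then have "real m \<le> real d * real n + 1" by (simp add: mult.commute)
      then have "real m \<le> 2 * (real d * real n)" using dn2 by linarith
      then have "log 2 (real m) \<le> log 2 (2 * (real d * real n))"
        using m(1) by (intro log_le_cancel_iff[THEN iffD2]) auto
      also have "\<dots> = 1 + L" unfolding L_def using dn2 by (subst log_mult) auto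
      finally have "log 2 (real m) \<le> 1 + L" .
      then have "real_of_int \<lceil>log 2 (real m)\<rceil> \<le> 2 + L"
        using of_int_ceiling_le_add_one[of "log 2 (real m)"] by linarith
      then show ?thesis unfolding bl_def ai using L1 by simp
    qed
    have "real_of_int (bl_vec n a) = (\<Sum>i<n. real_of_int (bl (a i)))"
      unfolding bl_vec_def by simp
    also have "\<dots> \<le> (\<Sum>i<n. 3 * L)" by (intro sum_mono bl) auto
    also have "\<dots> = 3 * real n * L" by simp
    finally show ?thesis using ha unfolding L_def
      by (intro exI[of _ a]) (auto simp: a_def)
  qed
qed

end
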